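(* Let $r\ge2$ and let $V^\star\in\mathcal V_r$ be nonempty, with $V$ its linear span and $d=\dim V$. Then for every $\vec k\in V^\star\cap\mathbb Z^{r-1}$, $\alpha(\vec k)\le 2^{r-d-1}$.
   Context: For $\vec k=(k_1,\ldots,k_{r-1})\in\mathbb R^{r-1}$ set $k_0=k_r=0$ and, for $\mathbf S\subset\{0,\ldots,r-1\}$, $k_{\mathbf S}=\sum_{j\in\mathbf S}(k_{j+1}-k_j)$. $\mathcal M_r$ is the set of equivalence classes of subsets of $\{0,\ldots,r-1\}$ under $\mathbf S\sim\{0,\ldots,r-1\}\setminus\mathbf S$ (the condition $k_{\mathbf S}=0$ depends only on the class since $k_{\mathbf S^c}=-k_{\mathbf S}$). $\alpha(\vec k)=\#\{[\mathbf S]\in\mathcal M_r:k_{\mathbf S}=0\}$. For $S\subset\mathcal M_r$, $\ker(M_S)=\{\vec k\in\mathbb R^{r-1}:k_{\mathbf S}=0\ \forall[\mathbf S]\in S\}$ and $\ker(M_S)^\star=\ker(M_S)\setminus\bigcup_{S_1\subset\mathcal M_r,\,S_1\supsetneq S}\ker(M_{S_1})$; $\mathcal V_r=\{\ker(M_S)^\star:S\subset\mathcal M_r\}$, which partitions $\mathbb R^{r-1}$. *)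

theory Defs
  imports "HOL-Analysis.Analysis" "HOL-Library.Function_Algebras"
begin

text \<open>Vectors of R^(r-1) are encoded as functions k :: nat => real with k j = 0
  for j = 0 and j >= r (so k_0 = k_r = 0 as in the paper, and k_1..k_(r-1) free).\<close>

definition Rvec :: "nat \<Rightarrow> (nat \<Rightarrow> real) set" where
  "Rvec r = {k. \<forall>j. (j = 0 \<or> r \<le> j) \<longrightarrow> k j = 0}"

definition kS :: "(nat \<Rightarrow> real) \<Rightarrow> nat set \<Rightarrow> real" where
  "kS k S = (\<Sum>j\<in>S. k (Suc j) - k j)"

definition Mr :: "nat \<Rightarrow> nat set set set" where
  "Mr r = {{S, {0..<r} - S} | S. S \<subseteq> {0..<r}}"

definition alpha :: "nat \<Rightarrow> (nat \<Rightarrow> real) \<Rightarrow> nat" where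
  "alpha r k = card {C \<in> Mr r. \<forall>S\<in>C. kS k S = 0}"

definition kerM :: "nat \<Rightarrow> nat set set set \<Rightarrow> (nat \<Rightarrow> real) set" where
  "kerM r SS = {k \<in> Rvec r. \<forall>C\<in>SS. \<forall>S\<in>C. kS k S = 0}"

definition kerStar :: "nat \<Rightarrow> nat set set set \<Rightarrow> (nat \<Rightarrow> real) set" where
  "kerStar r SS = kerM r SS - (\<Union>{kerM r S1 | S1. S1 \<subseteq> Mr r \<and> SS \<subset> S1})"

definition Vr :: "nat \<Rightarrow> (nat \<Rightarrow> real) set set" where
  "Vr r = {kerStar r SS | SS. SS \<subseteq> Mr r}"

definition fscale :: "real \<Rightarrow> (nat \<Rightarrow> real) \<Rightarrow> (nat \<Rightarrow> real)" where
  "fscale c f = (\<lambda>i. c * f i)"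

end

theory Submission
  imports Defs
begin

interpretation fv: vector_space fscale
  by unfold_locales (auto simp: fscale_def fun_eq_iff algebra_simps)

lemma sum_fun_app: "finite A \<Longrightarrow> (\<Sum>a\<in>A. (f a :: nat \<Rightarrow> real)) x = (\<Sum>a\<in>A. f a x)"
  by (induction A rule: finite_induct) auto

definition ind :: "nat set \<Rightarrow> nat \<Rightarrow> real" where
  "ind S = (\<lambda>i. if i \<in> S then 1 else 0)"

definition InjP :: "nat set set \<Rightarrow> nat set \<Rightarrow> bool" where
  "InjP A J = (\<forall>w\<in>fv.span (ind ` A). (\<forall>j\<in>J. w j = 0) \<longrightarrow> w = 0)"

lemma span_vanish:
  assumes "A \<subseteq> Pow {0..<r}" "w \<in> fv.span (ind ` A)" "i \<ge> r"
  shows "w i = 0"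
proof -
  have "fv.span (ind ` A) \<subseteq> {w. \<forall>i\<ge>r. w i = 0}"
    apply (rule fv.span_minimal)
    using assms(1) apply (force simp: ind_def)
    by (auto simp: fv.subspace_def fscale_def)
  thus ?thesis using assms by auto
qed

lemma span_functional:
  assumes "A \<subseteq> Pow {0..<r}" "w \<in> fv.span (ind ` A)"
    and "\<forall>S\<in>A. (\<Sum>j\<in>S. d j) = 0"
  shows "(\<Sum>i<r. d i * w i) = 0"
proof -
  have "fv.span (ind ` A) \<subseteq> {w. (\<Sum>i<r. d i * w i) = 0}"
  proof (rule fv.span_minimal)
    show "ind ` A \<subseteq> {w. (\<Sum>i<r. d i * w i) = 0}"
    proof
      fix x assume "x \<in> ind ` A"
      then obtain S where S: "S \<in> A" "x = ind S" by auto
      have "(\<Sum>i<r. d i * x i) = (\<Sum>i\<in>{..<r} \<inter> S. d i)"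
        by (simp add: S ind_def sum.inter_restrict if_distrib cong: if_cong)
      also have "{..<r} \<inter> S = S" using S assms(1) by fastforce
      finally show "x \<in> {w. (\<Sum>i<r. d i * w i) = 0}" using S assms(3) by auto
    qed
    show "fv.subspace {w. (\<Sum>i<r. d i * w i) = 0}"
      by (auto simp: fv.subspace_def fscale_def algebra_simps sum.distrib sum_distrib_left[symmetric])
  qed
  thus ?thesis using assms by auto
qed

lemma exists_J:
  fixes A :: "nat set set"
  assumes "A \<subseteq> Pow {0..<r}"
  obtains J where "J \<subseteq> {0..<r}" "inj_on (\<lambda>S. S \<inter> J) A"
    "\<And>d::nat\<Rightarrow>real. (\<forall>j. j \<notin> J \<longrightarrow> d j = 0) \<Longrightarrow> (\<forall>S\<in>A. (\<Sum>j\<in>S. d j) = 0) \<Longrightarrow> d = 0"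
proof -
  have ex: "{0..<r} \<subseteq> {0..<r} \<and> InjP A {0..<r}" unfolding InjP_def
  proof (intro conjI ballI impI subset_refl)
    fix w assume w: "w \<in> fv.span (ind ` A)" "\<forall>j\<in>{0..<r}. w j = 0"
    show "w = 0"
    proof
      fix i show "w i = 0 i"
        using w span_vanish[OF assms w(1), of i] by (cases "i < r") auto
    qed
  qed
  from ex_has_least_nat[where m=card and P="\<lambda>J. J \<subseteq> {0..<r} \<and> InjP A J", OF ex] obtain J where J0: "J \<subseteq> {0..<r} \<and> InjP A J"
    and Jmin0: "\<forall>y. y \<subseteq> {0..<r} \<and> InjP A y \<longrightarrow> card J \<le> card y" by blast
  have J: "J \<subseteq> {0..<r}" "InjP A J" using J0 by auto
  have Jmin: "\<And>J'. J' \<subseteq> {0..<r} \<Longrightarrow> InjP A J' \<Longrightarrow> card J \<le> card J'" using Jmin0 by blast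
  have finJ: "finite J" using J(1) finite_subset by blast
  show ?thesis
  proof (rule that[OF J(1)])
    show "inj_on (\<lambda>S. S \<inter> J) A"
    proof (rule inj_onI)
      fix S T assume ST: "S \<in> A" "T \<in> A" "S \<inter> J = T \<inter> J"
      let ?w = "ind S - ind T"
      have "?w \<in> fv.span (ind ` A)"
        using ST by (intro fv.span_diff fv.span_base) auto
      moreover have "\<forall>j\<in>J. ?w j = 0"
        using ST(3) by (auto simp: ind_def)
      ultimately have "?w = 0" using J(2) unfolding InjP_def by blast
      hence "\<And>x. ind S x = ind T x" by (metis diff_eq_eq fun_diff_def add_0 zero_fun_def)
      thus "S = T" unfolding ind_def
        by (metis one_neq_zero subsetI subset_antisym)
    qed
  next
    fix d :: "nat \<Rightarrow> real"
    assume d0: "\<forall>j. j \<notin> J \<longrightarrow> d j = 0" and dS: "\<forall>S\<in>A. (\<Sum>j\<in>S. d j) = 0"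
    show "d = 0"
    proof (rule ccontr)
      assume "d \<noteq> 0"
      then obtain j where dj: "d j \<noteq> 0" by (auto simp: fun_eq_iff)
      hence jJ: "j \<in> J" using d0 by auto
      have "InjP A (J - {j})" unfolding InjP_def
      proof (intro ballI impI)
        fix w assume w: "w \<in> fv.span (ind ` A)" "\<forall>i\<in>J - {j}. w i = 0"
        have s0: "(\<Sum>i<r. d i * w i) = 0" by (rule span_functional[OF assms w(1) dS])
        have "(\<Sum>i<r. d i * w i) = (\<Sum>i\<in>{j}. d i * w i)"
        proof (rule sum.mono_neutral_right)
          show "{j} \<subseteq> {..<r}" using jJ J(1) by auto
          show "\<forall>i\<in>{..<r} - {j}. d i * w i = 0"
            using w(2) d0 by auto
        qed auto
        hence "w j = 0" using s0 dj by simp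
        hence "\<forall>i\<in>J. w i = 0" using w(2) by auto
        thus "w = 0" using J(2) w(1) unfolding InjP_def by blast
      qed
      hence "card J \<le> card (J - {j})" using Jmin[of "J - {j}"] J(1) by blast
      moreover have "card (J - {j}) < card J" using finJ jJ by (metis card_Diff1_less)
      ultimately show False by simp
    qed
  qed
qed

lemma kS_full: "k \<in> Rvec r \<Longrightarrow> kS k {0..<r} = 0"
  unfolding kS_def Rvec_def atLeast0LessThan
  by (subst sum_lessThan_telescope) auto

lemma kS_compl:
  assumes "k \<in> Rvec r" "S \<subseteq> {0..<r}"
  shows "kS k ({0..<r} - S) = - kS k S"
  using kS_full[OF assms(1)] assms(2) unfolding kS_def
  by (simp add: sum_diff finite_subset)

definition Kp :: "nat \<Rightarrow> nat set set \<Rightarrow> (nat \<Rightarrow> real) set" where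
  "Kp r A = {v \<in> Rvec r. \<forall>S\<in>A. kS v S = 0}"

lemma Kp_subspace: "fv.subspace (Kp r A)"
  by (auto simp: fv.subspace_def Kp_def Rvec_def kS_def fscale_def sum.distrib
      sum_distrib_left[symmetric] algebra_simps sum_subtractf)

definition Pm :: "nat \<Rightarrow> nat set \<Rightarrow> (nat \<Rightarrow> real) \<Rightarrow> (nat \<Rightarrow> real)" where
  "Pm r J v = (\<lambda>j. if j < r \<and> j \<notin> J then v (Suc j) - v j else 0)"

lemma Pm_hom: "module_hom fscale fscale (Pm r J)"
  unfolding module_hom_def module_hom_axioms_def
  using fv.module_axioms
  by (auto simp: Pm_def fscale_def fun_eq_iff algebra_simps module_iff_vector_space)

lemma dim_bound:
  assumes AP: "A \<subseteq> Pow {0..<r}" and J: "J \<subseteq> {0..<r}"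
    and db: "\<And>d::nat\<Rightarrow>real. (\<forall>j. j \<notin> J \<longrightarrow> d j = 0) \<Longrightarrow> (\<forall>S\<in>A. (\<Sum>j\<in>S. d j) = 0) \<Longrightarrow> d = 0"
    and VK: "fv.span Vs \<subseteq> Kp r A"
  shows "fv.dim (fv.span Vs) + card J \<le> r"
proof -
  have zero: "z = 0" if z: "z \<in> Kp r A" "Pm r J z = 0" for z
  proof -
    define d where "d = (\<lambda>j. if j < r then z (Suc j) - z j else 0)"
    have "d = 0"
    proof (rule db)
      show "\<forall>j. j \<notin> J \<longrightarrow> d j = 0"
        using z(2) by (auto simp: d_def Pm_def fun_eq_iff split: if_splits)
      show "\<forall>S\<in>A. (\<Sum>j\<in>S. d j) = 0"
      proof
        fix S assume S: "S \<in> A"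
        hence "S \<subseteq> {0..<r}" using AP by auto
        hence "(\<Sum>j\<in>S. d j) = kS z S" unfolding kS_def d_def
          by (intro sum.cong) auto
        thus "(\<Sum>j\<in>S. d j) = 0" using z(1) S by (auto simp: Kp_def)
      qed
    qed
    have Rz: "z \<in> Rvec r" using z(1) by (auto simp: Kp_def)
    have "j \<le> r \<Longrightarrow> z j = 0" for j
    proof (induction j)
      case 0 thus ?case using Rz by (auto simp: Rvec_def)
    next
      case (Suc j)
      hence "d j = 0" using \<open>d = 0\<close> by simp
      thus ?case using Suc by (auto simp: d_def)
    qed
    moreover have "j \<ge> r \<Longrightarrow> z j = 0" for j using Rz by (auto simp: Rvec_def)
    ultimately show "z = 0" by (auto simp: fun_eq_iff) (meson nat_le_linear)
  qed
  have injK: "inj_on (Pm r J) (Kp r A)"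
  proof (rule inj_onI)
    fix x y assume xy: "x \<in> Kp r A" "y \<in> Kp r A" "Pm r J x = Pm r J y"
    have "x - y \<in> Kp r A" using fv.subspace_diff[OF Kp_subspace xy(1,2)] .
    moreover have "Pm r J (x - y) = 0"
    proof
      fix j
      have "Pm r J x j = Pm r J y j" using xy(3) by simp
      thus "Pm r J (x - y) j = 0 j" by (auto simp: Pm_def split: if_splits)
    qed
    ultimately have "x - y = 0" by (rule zero)
    thus "x = y" by simp
  qed
  obtain B where B: "B \<subseteq> fv.span Vs" "fv.independent B" "fv.span Vs \<subseteq> fv.span B"
    "card B = fv.dim (fv.span Vs)"
    by (rule fv.basis_exists)
  have spB: "fv.span B \<subseteq> Kp r A"
    using B(1) VK fv.span_minimal[OF _ Kp_subspace] by blast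
  have injB: "inj_on (Pm r J) (fv.span B)" using injK spB inj_on_subset by blast
  have indP: "fv.independent (Pm r J ` B)"
    using module_hom.independent_injective_image[OF Pm_hom B(2) injB] .
  define E where "E = (\<lambda>j. ind {j}) ` ({0..<r} - J)"
  have PE: "Pm r J ` B \<subseteq> fv.span E"
  proof
    fix u assume "u \<in> Pm r J ` B"
    then obtain v where u: "u = Pm r J v" by auto
    have "u = (\<Sum>j\<in>{0..<r} - J. fscale (u j) (ind {j}))"
    proof
      fix i
      have "(\<Sum>j\<in>{0..<r} - J. fscale (u j) (ind {j})) i = (\<Sum>j\<in>{0..<r} - J. u j * ind {j} i)"
        by (simp add: sum_fun_app fscale_def)
      also have "\<dots> = (\<Sum>j\<in>{0..<r} - J. if j = i then u i else 0)"
        by (intro sum.cong) (auto simp: ind_def)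
      also have "\<dots> = u i"
        by (auto simp: u Pm_def)
      finally show "u i = (\<Sum>j\<in>{0..<r} - J. fscale (u j) (ind {j})) i" by simp
    qed
    also have "\<dots> \<in> fv.span E"
      by (intro fv.span_sum fv.span_scale fv.span_base) (auto simp: E_def)
    finally show "u \<in> fv.span E" .
  qed
  have "card (Pm r J ` B) \<le> card E"
    using fv.independent_span_bound[OF _ indP PE] by (simp add: E_def)
  also have "\<dots> \<le> card ({0..<r} - J)" unfolding E_def by (rule card_image_le) simp
  also have "\<dots> = r - card J" using J by (simp add: card_Diff_subset finite_subset)
  finally have "card (Pm r J ` B) \<le> r - card J" .
  moreover have "card (Pm r J ` B) = card B"
    using injB fv.span_superset inj_on_subset card_image by metis
  moreover have "card J \<le> r" using J card_mono[of "{0..<r}" J] by simp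
  ultimately show ?thesis using B(4) by linarith
qed

theorem mainTheorem8:
  fixes r :: nat and Vs :: "(nat \<Rightarrow> real) set" and k :: "nat \<Rightarrow> real"
  assumes "r \<ge> 2"
    and "Vs \<in> Vr r" and "Vs \<noteq> {}"
    and "k \<in> Vs" and "\<forall>i. k i \<in> \<int>"
  shows "alpha r k \<le> 2 ^ (r - vector_space.dim fscale (module.span fscale Vs) - 1)"
proof -
  obtain SS where SS: "SS \<subseteq> Mr r" "Vs = kerStar r SS" using assms(2) by (auto simp: Vr_def)
  have kK: "k \<in> kerM r SS" using assms(4) SS by (auto simp: kerStar_def)
  have kR: "k \<in> Rvec r" using kK by (auto simp: kerM_def)
  define A where "A = {S. S \<subseteq> {0..<r} \<and> kS k S = 0}"
  have AP: "A \<subseteq> Pow {0..<r}" by (auto simp: A_def)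
  have finA: "finite A" using AP finite_subset by blast
  have Zf: "kS v S = 0" if S: "S \<in> A" and v: "v \<in> Vs" for S v
  proof -
    let ?C = "{S, {0..<r} - S}"
    have CM: "?C \<in> Mr r" using S by (auto simp: Mr_def A_def)
    have kc: "kS k ({0..<r} - S) = 0" using kS_compl[OF kR] S by (auto simp: A_def)
    have "?C \<in> SS"
    proof (rule ccontr)
      assume nC: "?C \<notin> SS"
      have "k \<in> kerM r (insert ?C SS)" using kK kc S by (auto simp: kerM_def A_def)
      moreover have "insert ?C SS \<subseteq> Mr r \<and> SS \<subset> insert ?C SS" using CM SS(1) nC by auto
      ultimately have "k \<in> \<Union>{kerM r S1 | S1. S1 \<subseteq> Mr r \<and> SS \<subset> S1}" by blast
      thus False using assms(4) SS(2) by (simp add: kerStar_def)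
    qed
    thus ?thesis using v SS(2) by (auto simp: kerStar_def kerM_def)
  qed
  have VK: "Vs \<subseteq> Kp r A" using Zf SS(2) by (auto simp: Kp_def kerStar_def kerM_def)
  hence VK': "fv.span Vs \<subseteq> Kp r A" using fv.span_minimal[OF _ Kp_subspace] by blast
  obtain J where J: "J \<subseteq> {0..<r}" "inj_on (\<lambda>S. S \<inter> J) A"
    "\<And>d::nat\<Rightarrow>real. (\<forall>j. j \<notin> J \<longrightarrow> d j = 0) \<Longrightarrow> (\<forall>S\<in>A. (\<Sum>j\<in>S. d j) = 0) \<Longrightarrow> d = 0"
    using exists_J[OF AP] by blast
  have dimb: "fv.dim (fv.span Vs) + card J \<le> r" using dim_bound[OF AP J(1) J(3) VK'] .
  have finJ: "finite J" using J(1) finite_subset by blast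
  have cA: "card A \<le> 2 ^ card J"
  proof -
    have "card A = card ((\<lambda>S. S \<inter> J) ` A)" using J(2) by (simp add: card_image)
    also have "\<dots> \<le> card (Pow J)" using finJ by (intro card_mono) auto
    also have "\<dots> = 2 ^ card J" using finJ by (simp add: card_Pow)
    finally show ?thesis .
  qed
  define A' where "A' = {S \<in> A. 0 \<notin> S}"
  define cp where "cp = (\<lambda>S. {0..<r} - S)"
  have finA': "finite A'" using finA by (simp add: A'_def)
  have r0: "0 < r" using assms(1) by simp
  have "card A' + card (cp ` A') \<le> card A"
  proof -
    have "card A' + card (cp ` A') = card (A' \<union> cp ` A')"
      using finA' r0 by (intro card_Un_disjoint[symmetric]) (auto simp: A'_def cp_def)
    also have "\<dots> \<le> card A"
    proof (intro card_mono finA)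
      show "A' \<union> cp ` A' \<subseteq> A"
        using kS_compl[OF kR] by (auto simp: A'_def A_def cp_def)
    qed
    finally show ?thesis .
  qed
  moreover have "card (cp ` A') = card A'"
  proof (rule card_image)
    show "inj_on cp A'" unfolding inj_on_def cp_def A'_def A_def by blast
  qed
  ultimately have c2: "2 * card A' \<le> 2 ^ card J" using cA by simp
  have "alpha r k \<le> card A'"
  proof -
    have "{C \<in> Mr r. \<forall>S\<in>C. kS k S = 0} \<subseteq> (\<lambda>S. {S, {0..<r} - S}) ` A'"
    proof
      fix C assume C: "C \<in> {C \<in> Mr r. \<forall>S\<in>C. kS k S = 0}"
      then obtain S where S: "S \<subseteq> {0..<r}" "C = {S, {0..<r} - S}" by (auto simp: Mr_def)
      show "C \<in> (\<lambda>S. {S, {0..<r} - S}) ` A'"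
      proof (cases "0 \<in> S")
        case True
        have "{0..<r} - ({0..<r} - S) = S" using S(1) by auto
        hence "C = (\<lambda>S. {S, {0..<r} - S}) ({0..<r} - S)" using S(2) by auto
        moreover have "{0..<r} - S \<in> A'" using C S True by (auto simp: A'_def A_def)
        ultimately show ?thesis by blast
      next
        case False
        thus ?thesis using C S by (auto simp: A'_def A_def)
      qed
    qed
    hence "alpha r k \<le> card ((\<lambda>S. {S, {0..<r} - S}) ` A')"
      unfolding alpha_def by (intro card_mono finite_imageI finA')
    also have "\<dots> \<le> card A'" by (rule card_image_le[OF finA'])
    finally show ?thesis .
  qed
  moreover have "card A' \<le> 2 ^ (card J - 1)"
  proof (cases "card J")
    case 0 thus ?thesis using c2 by simp
  next
    case (Suc m) thus ?thesis using c2 by simp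
  qed
  moreover have "(2::nat) ^ (card J - 1) \<le> 2 ^ (r - fv.dim (fv.span Vs) - 1)"
    using dimb by (intro power_increasing) auto
  ultimately show ?thesis by (meson order_trans)
qed

end
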